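(* Let $n\ge 3$. The prism $C_n\times K_2$ is $(a,d)$-distance antimagic for some integers $a$ and $d\ge0$ if and only if $d=1$.
   Context: The prism $C_n\times K_2$ is the Cartesian product of the cycle $C_n$ and $K_2$: it has vertices $x_1,\dots,x_n,y_1,\dots,y_n$, with $x_1\cdots x_nx_1$ and $y_1\cdots y_ny_1$ cycles and additional edges $x_iy_i$ for $i=1,\dots,n$; it is $3$-regular of order $2n$. For a graph $G=(V,E)$ with $v=|V|$ and a bijection $f:V\to\{1,\dots,v\}$, the vertex-weight of $x$ is $w(x)=\sum_{y\in N(x)}f(y)$ with $N(x)$ the set of neighbours of $x$. For integers $a$ and $d\ge0$, $f$ is an $(a,d)$-distance antimagic labeling if the multiset of vertex-weights equals $\{a,a+d,\dots,a+(v-1)d\}$; $G$ is $(a,d)$-distance antimagic if it admits such a labeling. *)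

theory Defs
  imports Main "HOL-Library.Multiset"
begin

definition nbhd :: "'v set \<Rightarrow> ('v \<Rightarrow> 'v \<Rightarrow> bool) \<Rightarrow> 'v \<Rightarrow> 'v set" where
  "nbhd V adj x = {y \<in> V. adj x y}"

definition vertex_weight :: "'v set \<Rightarrow> ('v \<Rightarrow> 'v \<Rightarrow> bool) \<Rightarrow> ('v \<Rightarrow> nat) \<Rightarrow> 'v \<Rightarrow> int" where
  "vertex_weight V adj f x = (\<Sum>y\<in>nbhd V adj x. int (f y))"

definition dist_antimagic_labeling ::
  "'v set \<Rightarrow> ('v \<Rightarrow> 'v \<Rightarrow> bool) \<Rightarrow> int \<Rightarrow> int \<Rightarrow> ('v \<Rightarrow> nat) \<Rightarrow> bool" where
  "dist_antimagic_labeling V adj a d f \<longleftrightarrow>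
     bij_betw f V {1..card V} \<and>
     image_mset (vertex_weight V adj f) (mset_set V) =
       mset (map (\<lambda>i. a + int i * d) [0..<card V])"

definition dist_antimagic :: "'v set \<Rightarrow> ('v \<Rightarrow> 'v \<Rightarrow> bool) \<Rightarrow> int \<Rightarrow> int \<Rightarrow> bool" where
  "dist_antimagic V adj a d \<longleftrightarrow> d \<ge> 0 \<and> (\<exists>f. dist_antimagic_labeling V adj a d f)"

text \<open>The prism C_n x K_2: vertex (i, False) is x_(i+1), vertex (i, True) is y_(i+1), for i < n.\<close>
definition prism_V :: "nat \<Rightarrow> (nat \<times> bool) set" where
  "prism_V n = {0..<n} \<times> UNIV"

definition prism_adj :: "nat \<Rightarrow> nat \<times> bool \<Rightarrow> nat \<times> bool \<Rightarrow> bool" where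
  "prism_adj n u v \<longleftrightarrow>
     (snd u = snd v \<and> (fst v = (fst u + 1) mod n \<or> fst u = (fst v + 1) mod n)) \<or>
     (fst u = fst v \<and> snd u \<noteq> snd v)"

end

theory Submission
  imports Defs
begin

definition nx :: "nat \<Rightarrow> nat \<Rightarrow> nat" where "nx n i = (if Suc i = n then 0 else Suc i)"
definition pv :: "nat \<Rightarrow> nat \<Rightarrow> nat" where "pv n i = (if i = 0 then n - 1 else i - 1)"

lemma mod_nx: "i < n \<Longrightarrow> (i + 1) mod n = nx n i"
  unfolding nx_def by auto

lemma nx_lt: "i < n \<Longrightarrow> nx n i < n" unfolding nx_def by auto
lemma pv_lt: "i < n \<Longrightarrow> pv n i < n" unfolding pv_def by auto

lemma adj_iff:
  assumes "i < n" "j < n"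
  shows "prism_adj n (i,b) (j,c) \<longleftrightarrow> (c = b \<and> (j = nx n i \<or> j = pv n i)) \<or> (j = i \<and> c = (\<not> b))"
proof -
  have "(i+1) mod n = nx n i" "(j+1) mod n = nx n j" using assms mod_nx by auto
  then have "prism_adj n (i,b) (j,c) \<longleftrightarrow> (b = c \<and> (j = nx n i \<or> i = nx n j)) \<or> (i = j \<and> b \<noteq> c)"
    unfolding prism_adj_def by simp
  also have "\<dots> \<longleftrightarrow> (c = b \<and> (j = nx n i \<or> j = pv n i)) \<or> (j = i \<and> c = (\<not> b))"
    using assms unfolding nx_def pv_def by auto
  finally show ?thesis .
qed

lemma nbhd_eq:
  assumes "i < n"
  shows "nbhd (prism_V n) (prism_adj n) (i,b) = {(pv n i, b), (nx n i, b), (i, \<not> b)}"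
  using assms unfolding nbhd_def prism_V_def
  by (auto simp: adj_iff nx_lt pv_lt)

lemma weight_eq:
  assumes "i < n" "n \<ge> 3"
  shows "vertex_weight (prism_V n) (prism_adj n) f (i,b) = int (f (pv n i, b)) + int (f (nx n i, b)) + int (f (i, \<not> b))"
proof -
  have "pv n i \<noteq> nx n i" using assms unfolding pv_def nx_def by auto
  then show ?thesis unfolding vertex_weight_def using assms by (simp add: nbhd_eq)
qed

lemma card_V: "card (prism_V n) = 2 * n"
  unfolding prism_V_def by (simp add: card_cartesian_product)

lemma fin_V: "finite (prism_V n)" unfolding prism_V_def by simp

lemma bij_P: "bij_betw (\<lambda>(i,b). (pv n i, b)) (prism_V n) (prism_V n)"
  by (rule bij_betw_byWitness[where f'="\<lambda>(i,b). (nx n i, b)"])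
     (auto simp: prism_V_def pv_def nx_def)

lemma bij_N: "bij_betw (\<lambda>(i,b). (nx n i, b)) (prism_V n) (prism_V n)"
  by (rule bij_betw_byWitness[where f'="\<lambda>(i,b). (pv n i, b)"])
     (auto simp: prism_V_def pv_def nx_def)

lemma bij_F: "bij_betw (\<lambda>(i,b). (i, \<not> b)) (prism_V n) (prism_V n)"
  by (rule bij_betw_byWitness[where f'="\<lambda>(i,b). (i, \<not> b)"])
     (auto simp: prism_V_def)

lemma gauss1: "2 * (\<Sum>k\<in>{1..m}. int k) = int m * (int m + 1)"
  by (induction m) (auto simp: algebra_simps)

lemma gauss0: "2 * (\<Sum>k<m. int k) = int m * (int m - 1)"
  by (induction m) (auto simp: algebra_simps)

lemma distinct3_bounds:
  fixes x y z N :: nat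
  assumes "x \<noteq> y" "x \<noteq> z" "y \<noteq> z" "x \<in> {1..N}" "y \<in> {1..N}" "z \<in> {1..N}"
  shows "6 \<le> x + y + z \<and> x + y + z + 3 \<le> 3 * N"
  using assms by auto

lemma weight_bounds:
  assumes n3: "n \<ge> 3" and bij: "bij_betw f (prism_V n) {1..2*n}" and v: "v \<in> prism_V n"
  shows "6 \<le> vertex_weight (prism_V n) (prism_adj n) f v \<and>
         vertex_weight (prism_V n) (prism_adj n) f v + 3 \<le> 6 * int n"
proof -
  obtain i b where vv: "v = (i,b)" and i: "i < n" using v by (cases v) (auto simp: prism_V_def)
  let ?p = "(pv n i, b)" and ?q = "(nx n i, b)" and ?r = "(i, \<not> b)"
  have inV: "?p \<in> prism_V n" "?q \<in> prism_V n" "?r \<in> prism_V n"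
    using i by (auto simp: prism_V_def pv_lt nx_lt)
  have dpq: "?p \<noteq> ?q" "?p \<noteq> ?r" "?q \<noteq> ?r" using i n3 by (auto simp: pv_def nx_def)
  have inj: "inj_on f (prism_V n)" using bij bij_betw_def by blast
  have d: "f ?p \<noteq> f ?q" "f ?p \<noteq> f ?r" "f ?q \<noteq> f ?r"
    using dpq inV inj unfolding inj_on_def by metis+
  have r: "f ?p \<in> {1..2*n}" "f ?q \<in> {1..2*n}" "f ?r \<in> {1..2*n}"
    using inV bij bij_betwE by blast+
  have "6 \<le> f ?p + f ?q + f ?r \<and> f ?p + f ?q + f ?r + 3 \<le> 3 * (2*n)"
    by (rule distinct3_bounds[OF d r])
  then show ?thesis using weight_eq[OF i n3, of f b] vv by simp
qed

lemma mem_V: "(i,b) \<in> prism_V n \<longleftrightarrow> i < n" by (simp add: prism_V_def)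

lemma sum_weights:
  assumes n3: "n \<ge> 3"
  shows "(\<Sum>v\<in>prism_V n. vertex_weight (prism_V n) (prism_adj n) f v) = 3 * (\<Sum>v\<in>prism_V n. int (f v))"
proof -
  let ?g = "\<lambda>v. int (f v)"
  have "(\<Sum>v\<in>prism_V n. vertex_weight (prism_V n) (prism_adj n) f v) =
        (\<Sum>v\<in>prism_V n. ?g ((\<lambda>(i,b). (pv n i, b)) v) + ?g ((\<lambda>(i,b). (nx n i, b)) v) + ?g ((\<lambda>(i,b). (i, \<not> b)) v))"
    by (rule sum.cong) (auto simp: mem_V weight_eq[OF _ n3])
  also have "\<dots> = (\<Sum>v\<in>prism_V n. ?g ((\<lambda>(i,b). (pv n i, b)) v)) + (\<Sum>v\<in>prism_V n. ?g ((\<lambda>(i,b). (nx n i, b)) v))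
       + (\<Sum>v\<in>prism_V n. ?g ((\<lambda>(i,b). (i, \<not> b)) v))"
    by (simp add: sum.distrib)
  also have "\<dots> = 3 * (\<Sum>v\<in>prism_V n. ?g v)"
    using sum.reindex_bij_betw[OF bij_P, of ?g n] sum.reindex_bij_betw[OF bij_N, of ?g n]
      sum.reindex_bij_betw[OF bij_F, of ?g n] by simp
  finally show ?thesis .
qed

lemma necessity:
  assumes n3: "n \<ge> 3" and d0: "d \<ge> 0" and L: "dist_antimagic_labeling (prism_V n) (prism_adj n) a d f"
  shows "d = 1"
proof -
  let ?V = "prism_V n" and ?w = "vertex_weight (prism_V n) (prism_adj n) f"
  have bij: "bij_betw f ?V {1..2*n}" and M: "image_mset ?w (mset_set ?V) = mset (map (\<lambda>i. a + int i * d) [0..<2*n])"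
    using L unfolding dist_antimagic_labeling_def card_V by auto
  have sf: "(\<Sum>v\<in>?V. int (f v)) = (\<Sum>k\<in>{1..2*n}. int k)"
    using sum.reindex_bij_betw[OF bij, of int] by simp
  have lhs: "sum_mset (image_mset ?w (mset_set ?V)) = (\<Sum>v\<in>?V. ?w v)"
    by (simp add: sum_unfold_sum_mset)
  have rhs: "sum_mset (mset (map (\<lambda>i. a + int i * d) [0..<2*n])) = (\<Sum>i<2*n. a + int i * d)"
    by (simp add: sum_mset_sum_list interv_sum_list_conv_sum_set_nat atLeast0LessThan sum_unfold_sum_mset[symmetric])
  have "(\<Sum>i<2*n. a + int i * d) = int (2*n) * a + d * (\<Sum>i<2*n. int i)"
    by (simp add: sum.distrib sum_distrib_left sum_distrib_right mult.commute)
  have eq: "3 * (\<Sum>k\<in>{1..2*n}. int k) = int (2*n) * a + d * (\<Sum>i<2*n. int i)"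
    using M lhs rhs sum_weights[OF n3, of f] sf
    by (simp add: sum.distrib sum_distrib_left sum_distrib_right mult.commute)
  define m where "m = int n"
  have m3: "m \<ge> 3" using n3 m_def by simp
  have "3 * (2*m) * (2*m+1) = 2 * (2*m) * a + d * (2*m) * (2*m - 1)"
  proof -
    define S1 where "S1 = (\<Sum>k\<in>{1..2*n}. int k)"
    define S0 where "S0 = (\<Sum>i<2*n. int i)"
    have e1: "2 * S1 = (2*m) * (2*m+1)" using gauss1[of "2*n"] unfolding S1_def m_def by simp
    have e0: "2 * S0 = (2*m) * (2*m-1)" using gauss0[of "2*n"] unfolding S0_def m_def by simp
    have "3 * (2 * S1) = 2 * (2*m) * a + d * (2 * S0)" using eq unfolding S1_def S0_def m_def by (simp add: algebra_simps)
    then show ?thesis unfolding e1 e0 by (simp add: algebra_simps)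
  qed
  then have key: "3 * (2*m+1) = 2 * a + d * (2*m - 1)"
  proof -
    assume h: "3 * (2*m) * (2*m+1) = 2 * (2*m) * a + d * (2*m) * (2*m - 1)"
    have "(2*m) * (3 * (2*m+1)) = (2*m) * (2 * a + d * (2*m - 1))" using h by (simp add: algebra_simps)
    then show ?thesis using m3 by simp
  qed
  have mem: "\<And>i. i < 2*n \<Longrightarrow> \<exists>v\<in>?V. ?w v = a + int i * d"
  proof -
    fix i assume "i < 2*n"
    then have "a + int i * d \<in># mset (map (\<lambda>i. a + int i * d) [0..<2*n])" by force
    then have "a + int i * d \<in># image_mset ?w (mset_set ?V)" using M by simp
    then show "\<exists>v\<in>?V. ?w v = a + int i * d" using fin_V by auto
  qed
  obtain v1 where v1: "v1 \<in> ?V" "?w v1 = a" using mem[of 0] n3 by auto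
  obtain v2 where v2: "v2 \<in> ?V" "?w v2 = a + int (2*n - 1) * d" using mem[of "2*n-1"] n3 by auto
  have b1: "6 \<le> a" using weight_bounds[OF n3 bij v1(1)] v1(2) by simp
  have b2: "a + (2*m - 1) * d + 3 \<le> 6 * m" using weight_bounds[OF n3 bij v2(1)] v2(2) n3 unfolding m_def
    by (simp add: of_nat_diff)
  have d3: "d < 3"
  proof (rule ccontr)
    assume "\<not> d < 3"
    then have "(2*m - 1) * 3 \<le> (2*m - 1) * d" using m3 by (intro mult_left_mono) auto
    then have "6 * m - 3 \<le> (2*m - 1) * d" by simp
    then show False using b1 b2 by linarith
  qed
  have dodd: "odd d"
  proof
    assume "even d"
    then obtain k where k: "d = 2 * k" by auto
    define t where "t = k * (2*m - 1)"
    have "3 * (2*m+1) = 2 * a + 2 * t" using key k t_def by (simp add: algebra_simps)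
    then show False by presburger
  qed
  show "d = 1" using d3 d0 dodd by presburger
qed

definition lab :: "nat \<Rightarrow> nat \<times> bool \<Rightarrow> nat" where
  "lab n v = (if snd v then (if fst v = 0 then n + 1 else 2*n + 1 - fst v) else fst v + 1)"

lemma lab_bij:
  assumes n3: "n \<ge> 3"
  shows "bij_betw (lab n) (prism_V n) {1..2*n}"
proof -
  have sub1: "lab n ` prism_V n \<subseteq> {1..2*n}"
    by (auto simp: lab_def prism_V_def)
  have sub2: "{1..2*n} \<subseteq> lab n ` prism_V n"
  proof
    fix k assume k: "k \<in> {1..2*n}"
    show "k \<in> lab n ` prism_V n"
    proof (cases "k \<le> n")
      case True
      then have "lab n (k - 1, False) = k" "(k-1, False) \<in> prism_V n" using k by (auto simp: lab_def prism_V_def)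
      then show ?thesis by (metis imageI)
    next
      case False
      show ?thesis
      proof (cases "k = n + 1")
        case True
        then have "lab n (0, True) = k" "(0, True) \<in> prism_V n" using k n3 by (auto simp: lab_def prism_V_def)
        then show ?thesis by (metis imageI)
      next
        case F2: False
        then have "lab n (2*n+1-k, True) = k" "(2*n+1-k, True) \<in> prism_V n" using k False by (auto simp: lab_def prism_V_def)
        then show ?thesis by (metis imageI)
      qed
    qed
  qed
  have eq: "lab n ` prism_V n = {1..2*n}" using sub1 sub2 by blast
  have "card (lab n ` prism_V n) = card (prism_V n)" using eq card_V by simp
  then have "inj_on (lab n) (prism_V n)" using inj_on_iff_eq_card[OF fin_V] by blast
  then show ?thesis using eq by (simp add: bij_betw_def)
qed

lemma w_lab_F:
  assumes n3: "n \<ge> 3" and i: "i < n"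
  shows "vertex_weight (prism_V n) (prism_adj n) (lab n) (i, False) =
    (if i = 0 then 2*int n+3 else if i = n - 1 then 2*int n+2 else 2*int n+3+int i)"
  using n3 i unfolding weight_eq[OF i n3] by (auto simp: lab_def pv_def nx_def of_nat_diff)

lemma w_lab_T:
  assumes n3: "n \<ge> 3" and i: "i < n"
  shows "vertex_weight (prism_V n) (prism_adj n) (lab n) (i, True) =
    (if i = 0 then 3*int n+3 else if i = 1 then 3*int n+2 else if i = n - 1 then 3*int n+4 else 4*int n+3-int i)"
  using n3 i unfolding weight_eq[OF i n3] by (auto simp: lab_def pv_def nx_def of_nat_diff)

lemma sufficiency:
  assumes n3: "n \<ge> 3"
  shows "dist_antimagic_labeling (prism_V n) (prism_adj n) (2 * int n + 2) 1 (lab n)"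
proof -
  let ?V = "prism_V n" and ?w = "vertex_weight (prism_V n) (prism_adj n) (lab n)"
  let ?g = "\<lambda>i::nat. (2 * int n + 2) + int i * 1"
  let ?T = "?g ` {0..<2*n}"
  have sub: "?T \<subseteq> ?w ` ?V"
  proof
    fix t assume "t \<in> ?T"
    then obtain k where k: "k < 2*n" "t = 2 * int n + 2 + int k" by auto
    have inV: "\<And>i b. i < n \<Longrightarrow> (i,b) \<in> ?V" by (simp add: mem_V)
    consider "k = 0" | "k = 1" | "2 \<le> k \<and> k \<le> n - 1" | "k = n" | "k = n + 1" | "k = n + 2" | "n + 3 \<le> k"
      by linarith
    then show "t \<in> ?w ` ?V"
    proof cases
      case 1
      have "?w (n-1, False) = t" using k 1 n3 by (simp add: w_lab_F)
      then show ?thesis using inV[of "n-1"] n3 by (metis diff_less imageI le_trans less_numeral_extra(1) zero_less_numeral less_le_trans)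
    next
      case 2
      have "?w (0, False) = t" using k 2 n3 by (simp add: w_lab_F)
      then show ?thesis using inV[of 0] n3 by (metis imageI le_trans less_le_trans zero_less_numeral)
    next
      case 3
      have kl: "k - 1 < n" using 3 by linarith
      have "?w (k-1, False) = t" unfolding w_lab_F[OF n3 kl] using k 3 n3 by (auto simp: of_nat_diff)
      then show ?thesis using inV[of "k-1"] 3 by (metis imageI diff_less less_le_trans le_trans one_le_numeral less_numeral_extra(1) diff_le_self order.strict_trans1 Suc_le_eq le_diff_conv2 add_leD2)
    next
      case 4
      have "?w (1, True) = t" using k 4 n3 by (simp add: w_lab_T)
      then show ?thesis using inV[of 1] n3 by force
    next
      case 5
      have "?w (0, True) = t" using k 5 n3 by (simp add: w_lab_T)
      then show ?thesis using inV[of 0] n3 by force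
    next
      case 6
      have "?w (n-1, True) = t" using k 6 n3 by (simp add: w_lab_T)
      then show ?thesis using inV[of "n-1"] n3 by force
    next
      case 7
      have kl: "2*n+1-k < n" using 7 k by linarith
      have "?w (2*n+1-k, True) = t" unfolding w_lab_T[OF n3 kl] using k 7 n3 by (auto simp: of_nat_diff)
      then show ?thesis using inV[OF kl, of True] by (metis imageI)
    qed
  qed
  have injg: "inj_on ?g {0..<2*n}" by (auto simp: inj_on_def)
  have cT: "card ?T = 2*n" using card_image[OF injg] by simp
  have fin: "finite (?w ` ?V)" using fin_V by simp
  have "card ?T \<le> card (?w ` ?V)" using card_mono[OF fin sub] .
  moreover have "card (?w ` ?V) \<le> card ?V" using card_image_le[OF fin_V] .
  ultimately have cw: "card (?w ` ?V) = card ?V" using cT card_V by simp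
  then have injw: "inj_on ?w ?V" using inj_on_iff_eq_card[OF fin_V] by blast
  have eqT: "?w ` ?V = ?T" using card_subset_eq[OF fin sub] cw cT card_V by simp
  have "image_mset ?w (mset_set ?V) = mset_set ?T"
    using image_mset_mset_set[OF injw] eqT by simp
  also have "\<dots> = image_mset ?g (mset_set {0..<2*n})"
    using image_mset_mset_set[OF injg] by simp
  also have "\<dots> = mset (map ?g [0..<2*n])" by (simp add: mset_map)
  finally show ?thesis unfolding dist_antimagic_labeling_def card_V using lab_bij[OF n3] by simp
qed

theorem mainTheorem9:
  fixes n :: nat and d :: int
  assumes "n \<ge> 3" and "d \<ge> 0"
  shows "(\<exists>a. dist_antimagic (prism_V n) (prism_adj n) a d) \<longleftrightarrow> d = 1"
proof
  assume "\<exists>a. dist_antimagic (prism_V n) (prism_adj n) a d"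
  then obtain a f where "dist_antimagic_labeling (prism_V n) (prism_adj n) a d f"
    unfolding dist_antimagic_def by blast
  then show "d = 1" using necessity assms by blast
next
  assume "d = 1"
  then show "\<exists>a. dist_antimagic (prism_V n) (prism_adj n) a d"
    unfolding dist_antimagic_def using sufficiency[OF assms(1)] by auto
qed

end
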